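(* For any compact metric measure space $(X,d_X,\mu_X)$, the eigenvalue $\lambda_1$ of largest absolute value of the distance kernel operator $D^X$ satisfies $|\lambda_1|\le\operatorname{diam}(X)\operatorname{vol}(X)$, and this bound is asymptotically sharp: there exist compact metric measure spaces $X_n$ for which $|\lambda_1(X_n)|/(\operatorname{diam}(X_n)\operatorname{vol}(X_n))\to1$.
   Context: A metric measure space carries a Radon Borel measure $\mu_X$; $\operatorname{vol}(X)=\mu_X(X)$ and $\operatorname{diam}(X)=\sup\{d_X(x,x'):x,x'\in X\}$. The distance kernel operator is $(D^Xf)(x)=\int_X f(y)d_X(x,y)\,d\mu_X(y)$ on $L^2(X,\mu_X)$; its eigenvalues are ordered so that $|\lambda_1|\ge|\lambda_2|\ge\cdots$. *)

theory Defs
  imports "HOL-Analysis.Analysis"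
begin

definition mm_borel :: "'a set \<Rightarrow> ('a \<Rightarrow> 'a \<Rightarrow> real) \<Rightarrow> 'a measure" where
  "mm_borel M d = sigma M {U. openin (Metric_space.mtopology M d) U}"

text \<open>Compact metric measure space: compact metric space (M,d) with a finite
  (on a compact metric space: equivalently Radon) Borel measure mu on M.\<close>
definition compact_mm_space :: "'a set \<Rightarrow> ('a \<Rightarrow> 'a \<Rightarrow> real) \<Rightarrow> 'a measure \<Rightarrow> bool" where
  "compact_mm_space M d \<mu> \<longleftrightarrow>
     Metric_space M d \<and> compact_space (Metric_space.mtopology M d) \<and>
     space \<mu> = M \<and> sets \<mu> = sets (mm_borel M d) \<and> finite_measure \<mu>"

definition mm_diam :: "'a set \<Rightarrow> ('a \<Rightarrow> 'a \<Rightarrow> real) \<Rightarrow> real" where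
  "mm_diam M d = Sup {d x x' | x x'. x \<in> M \<and> x' \<in> M}"

definition mm_vol :: "'a measure \<Rightarrow> real" where
  "mm_vol \<mu> = measure \<mu> (space \<mu>)"

definition dist_kernel_op :: "'a measure \<Rightarrow> ('a \<Rightarrow> 'a \<Rightarrow> real) \<Rightarrow> ('a \<Rightarrow> real) \<Rightarrow> 'a \<Rightarrow> real" where
  "dist_kernel_op \<mu> d f x = (\<integral>y. f y * d x y \<partial>\<mu>)"

definition dist_kernel_eigenvalue :: "'a measure \<Rightarrow> ('a \<Rightarrow> 'a \<Rightarrow> real) \<Rightarrow> real \<Rightarrow> bool" where
  "dist_kernel_eigenvalue \<mu> d l \<longleftrightarrow>
     (\<exists>f. f \<in> borel_measurable \<mu> \<and> integrable \<mu> (\<lambda>x. (f x)\<^sup>2) \<and>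
          \<not> (AE x in \<mu>. f x = 0) \<and>
          (AE x in \<mu>. dist_kernel_op \<mu> d f x = l * f x))"

end

theory Submission imports Defs "HOL-Real_Asymp.Real_Asymp" begin

lemma dist_meas:
  assumes ms: "Metric_space M d" and x: "x \<in> M"
  shows "d x \<in> borel_measurable (mm_borel M d)"
proof (rule borel_measurableI)
  interpret Metric_space M d by (rule ms)
  fix S :: "real set" assume S: "open S"
  have G: "{U. openin mtopology U} \<subseteq> Pow M"
    using openin_subset by fastforce
  have sp: "space (mm_borel M d) = M"
    unfolding mm_borel_def using G by (simp add: space_measure_of_conv)
  have op: "openin mtopology (d x -` S \<inter> M)"
    unfolding openin_mtopology
  proof (intro conjI allI impI)
    fix y assume y: "y \<in> d x -` S \<inter> M"
    then obtain e where e: "e > 0" "ball (d x y) e \<subseteq> S"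
      using S open_contains_ball by blast
    have "mball y e \<subseteq> d x -` S \<inter> M"
    proof
      fix z assume z: "z \<in> mball y e"
      then have "z \<in> M" "d y z < e" by auto
      then have "\<bar>d x z - d x y\<bar> < e"
        using triangle[of x y z] triangle[of x z y] x y commute[of y z] by auto
      then have "d x z \<in> ball (d x y) e" by (simp add: dist_real_def abs_minus_commute)
      with e \<open>z \<in> M\<close> show "z \<in> d x -` S \<inter> M" by auto
    qed
    then show "\<exists>r>0. mball y r \<subseteq> d x -` S \<inter> M" using e by blast
  qed auto
  show "d x -` S \<inter> space (mm_borel M d) \<in> sets (mm_borel M d)"
    unfolding sp unfolding mm_borel_def using G op
    by (simp add: sets_measure_of_conv sigma_sets.Basic)
qed

lemma sq_bound: "\<bar>t\<bar> \<le> \<bar>1 + t\<^sup>2\<bar>" for t :: real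
proof (cases "\<bar>t\<bar> \<le> 1")
  case True thus ?thesis by (smt (verit) zero_le_power2)
next
  case False
  then have "1 * \<bar>t\<bar> \<le> \<bar>t\<bar> * \<bar>t\<bar>" using mult_right_mono[of 1 "\<bar>t\<bar>" "\<bar>t\<bar>"] by simp
  then show ?thesis by (simp add: power2_eq_square abs_mult_self_eq)
qed

lemma part1:
  assumes cm: "compact_mm_space M d \<mu>" and ev: "dist_kernel_eigenvalue \<mu> d l"
  shows "\<bar>l\<bar> \<le> mm_diam M d * mm_vol \<mu>"
proof -
  have ms: "Metric_space M d" and cs: "compact_space (Metric_space.mtopology M d)"
    and sp: "space \<mu> = M" and ss: "sets \<mu> = sets (mm_borel M d)" and fm: "finite_measure \<mu>"
    using cm unfolding compact_mm_space_def by auto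
  interpret Metric_space M d by (rule ms)
  interpret finite_measure \<mu> by (rule fm)
  obtain f where fmeas: "f \<in> borel_measurable \<mu>" and f2: "integrable \<mu> (\<lambda>x. (f x)\<^sup>2)"
    and nz: "\<not> (AE x in \<mu>. f x = 0)" and eq: "AE x in \<mu>. dist_kernel_op \<mu> d f x = l * f x"
    using ev unfolding dist_kernel_eigenvalue_def by blast
  define D where "D = mm_diam M d"
  have "mbounded M" using cs compactin_imp_mbounded unfolding compact_space_def by (metis topspace_mtopology)
  then obtain B where B: "\<forall>x\<in>M. \<forall>y\<in>M. d x y \<le> B" unfolding mbounded_alt by blast
  have dD: "d x y \<le> D" if "x \<in> M" "y \<in> M" for x y
    unfolding D_def mm_diam_def
    by (rule cSup_upper) (use that B in \<open>auto simp: bdd_above_def\<close>)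
  have fi: "integrable \<mu> f"
  proof (rule Bochner_Integration.integrable_bound[OF _ fmeas])
    show "integrable \<mu> (\<lambda>x. 1 + (f x)\<^sup>2)" using f2 by simp
    show "AE x in \<mu>. norm (f x) \<le> norm (1 + (f x)\<^sup>2)"
      by (intro AE_I2) (metis sq_bound real_norm_def)
  qed
  have fai: "integrable \<mu> (\<lambda>x. \<bar>f x\<bar>)" using fi by simp
  have dm: "d x \<in> borel_measurable \<mu>" if "x \<in> M" for x
    using dist_meas[OF ms that] measurable_cong_sets[OF ss refl, of borel] by (metis (no_types))
  have bnd: "\<bar>dist_kernel_op \<mu> d f x\<bar> \<le> D * (\<integral>y. \<bar>f y\<bar> \<partial>\<mu>)" if x: "x \<in> M" for x
  proof -
    have i1: "integrable \<mu> (\<lambda>y. D * \<bar>f y\<bar>)" using fai by simp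
    have i2: "integrable \<mu> (\<lambda>y. f y * d x y)"
    proof (rule Bochner_Integration.integrable_bound[OF i1])
      show "(\<lambda>y. f y * d x y) \<in> borel_measurable \<mu>" using fmeas dm[OF x] by measurable
      show "AE y in \<mu>. norm (f y * d x y) \<le> norm (D * \<bar>f y\<bar>)"
      proof (intro AE_I2)
        fix y assume "y \<in> space \<mu>"
        then have "0 \<le> d x y" "d x y \<le> D" using x dD sp by auto
        then have "\<bar>f y\<bar> * d x y \<le> \<bar>f y\<bar> * D" by (simp add: mult_left_mono)
        also have "\<dots> \<le> \<bar>D\<bar> * \<bar>f y\<bar>" by (simp add: mult.commute mult_right_mono)
        finally show "norm (f y * d x y) \<le> norm (D * \<bar>f y\<bar>)"
          using \<open>0 \<le> d x y\<close> by (simp add: abs_mult)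
      qed
    qed
    have "\<bar>dist_kernel_op \<mu> d f x\<bar> \<le> (\<integral>y. \<bar>f y * d x y\<bar> \<partial>\<mu>)"
      unfolding dist_kernel_op_def by (rule integral_abs_bound)
    also have "\<dots> \<le> (\<integral>y. D * \<bar>f y\<bar> \<partial>\<mu>)"
    proof (rule integral_mono_AE)
      show "integrable \<mu> (\<lambda>y. \<bar>f y * d x y\<bar>)" using i2 by simp
      show "integrable \<mu> (\<lambda>y. D * \<bar>f y\<bar>)" by (rule i1)
      show "AE y in \<mu>. \<bar>f y * d x y\<bar> \<le> D * \<bar>f y\<bar>"
      proof (intro AE_I2)
        fix y assume "y \<in> space \<mu>"
        then have "0 \<le> d x y" "d x y \<le> D" using x dD sp by auto
        then show "\<bar>f y * d x y\<bar> \<le> D * \<bar>f y\<bar>"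
          using mult_left_mono[of "d x y" D "\<bar>f y\<bar>"] by (simp add: abs_mult mult.commute)
      qed
    qed
    also have "\<dots> = D * (\<integral>y. \<bar>f y\<bar> \<partial>\<mu>)" by simp
    finally show ?thesis .
  qed
  have ae: "AE x in \<mu>. \<bar>l\<bar> * \<bar>f x\<bar> \<le> D * (\<integral>y. \<bar>f y\<bar> \<partial>\<mu>)"
    using eq AE_space
  proof eventually_elim
    case (elim x)
    then have "\<bar>l\<bar> * \<bar>f x\<bar> = \<bar>dist_kernel_op \<mu> d f x\<bar>" by (simp add: abs_mult)
    also have "\<dots> \<le> D * (\<integral>y. \<bar>f y\<bar> \<partial>\<mu>)" using bnd[of x] elim sp by simp
    finally show ?case .
  qed
  define I where "I = (\<integral>y. \<bar>f y\<bar> \<partial>\<mu>)"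
  have "(\<integral>x. \<bar>l\<bar> * \<bar>f x\<bar> \<partial>\<mu>) \<le> (\<integral>x. D * I \<partial>\<mu>)"
    by (rule integral_mono_AE) (use fai ae in \<open>auto simp: I_def\<close>)
  then have le: "\<bar>l\<bar> * I \<le> (D * mm_vol \<mu>) * I"
    by (simp add: I_def mm_vol_def mult_ac)
  have "I \<ge> 0" unfolding I_def by simp
  moreover have "I \<noteq> 0"
  proof
    assume "I = 0"
    then have "AE x in \<mu>. \<bar>f x\<bar> = 0"
      using integral_nonneg_eq_0_iff_AE[OF fai] unfolding I_def by simp
    with nz show False by simp
  qed
  ultimately have "I > 0" by simp
  with le show ?thesis unfolding D_def by simp
qed

definition dd :: "'a \<Rightarrow> 'a \<Rightarrow> real" where "dd x y = (if x = y then 0 else 1)"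

lemma dd_metric: "Metric_space A dd"
  by unfold_locales (auto simp: dd_def)

lemma dd_open: assumes "U \<subseteq> A" shows "openin (Metric_space.mtopology A dd) U"
proof -
  interpret Metric_space A dd by (rule dd_metric)
  show ?thesis unfolding openin_mtopology
  proof (intro conjI allI impI assms)
    fix x assume x: "x \<in> U"
    have "mball x (1/2) \<subseteq> U" using x by (auto simp: dd_def split: if_splits)
    then show "\<exists>r>0. mball x r \<subseteq> U" by (intro exI[of _ "1/2"]) auto
  qed
qed

lemma dd_cm: assumes "finite A" shows "compact_mm_space A dd (count_space A)"
proof -
  interpret Metric_space A dd by (rule dd_metric)
  have G: "{U. openin mtopology U} = Pow A" using dd_open openin_subset by fastforce
  have "sets (mm_borel A dd) = Pow A"
    unfolding mm_borel_def G
    by (simp add: sets_measure_of_conv) (meson Pow_iff sigma_sets_into_sp sigma_sets_superset_generator subset_antisym subset_refl subsetI)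
  moreover have "compact_space mtopology"
    using assms by (simp add: compact_space_def finite_imp_compactin)
  moreover have "finite_measure (count_space A)" using assms by (rule finite_measure_count_space)
  ultimately show ?thesis unfolding compact_mm_space_def using dd_metric by simp
qed

lemma dd_sum: assumes "finite A" "x \<in> A"
  shows "(\<Sum>y\<in>A. f y * dd x y) = (\<Sum>y\<in>A - {x}. f y)"
proof -
  have "(\<Sum>y\<in>A. f y * dd x y) = (\<Sum>y\<in>A - {x}. f y * dd x y) + f x * dd x x"
    using assms by (simp add: sum.remove add.commute)
  also have "\<dots> = (\<Sum>y\<in>A - {x}. f y)" by (simp add: dd_def) (rule sum.cong; auto)
  finally show ?thesis .
qed

lemma dd_sum1: assumes "finite A" "x \<in> A"
  shows "sum (dd x) A = real (card A) - 1"
proof -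
  have "card A > 0" using assms card_gt_0_iff by blast
  then have c: "card A \<ge> 1" by simp
  have "sum (dd x) A = (\<Sum>y\<in>A-{x}. 1)" using dd_sum[OF assms, of "\<lambda>_. 1"] by simp
  also have "\<dots> = real (card (A - {x}))" by simp
  also have "\<dots> = real (card A - 1)" using assms by (simp only: card_Diff_singleton)
  also have "\<dots> = real (card A) - 1" using c by (simp only: of_nat_diff of_nat_1)
  finally show ?thesis .
qed

lemma dd_ev: assumes "finite A" "A \<noteq> {}"
  shows "dist_kernel_eigenvalue (count_space A) dd (real (card A) - 1)"
  unfolding dist_kernel_eigenvalue_def
proof (intro exI[of _ "\<lambda>_. 1"] conjI)
  show "integrable (count_space A) (\<lambda>x. (1::real)\<^sup>2)" using assms by (simp add: integrable_count_space)
  show "\<not> (AE x in count_space A. (1::real) = 0)" using assms by (simp add: AE_count_space)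
  show "AE x in count_space A. dist_kernel_op (count_space A) dd (\<lambda>_. 1) x = (real (card A) - 1) * 1"
    unfolding AE_count_space dist_kernel_op_def
    using assms by (simp add: lebesgue_integral_count_space_finite dd_sum1)
qed simp

lemma dd_bound: assumes "finite A" and ev: "dist_kernel_eigenvalue (count_space A) dd l"
  shows "\<bar>l\<bar> \<le> real (card A) - 1"
proof -
  obtain f where nz: "\<not> (AE x in count_space A. f x = (0::real))"
    and eq: "AE x in count_space A. dist_kernel_op (count_space A) dd f x = l * f x"
    using ev unfolding dist_kernel_eigenvalue_def by blast
  have nz': "\<exists>x\<in>A. f x \<noteq> 0" using nz by (auto simp: AE_count_space)
  have eq': "(\<Sum>y\<in>A - {x}. f y) = l * f x" if "x \<in> A" for x
    using eq that assms(1) by (auto simp: AE_count_space dist_kernel_op_def lebesgue_integral_count_space_finite dd_sum)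
  define S where "S = (\<Sum>y\<in>A. \<bar>f y\<bar>)"
  have S0: "S > 0" unfolding S_def using nz' assms(1)
    by (metis abs_ge_zero sum_pos2 zero_less_abs_iff)
  have pt: "\<bar>l\<bar> * \<bar>f x\<bar> \<le> S - \<bar>f x\<bar>" if x: "x \<in> A" for x
  proof -
    have "\<bar>l\<bar> * \<bar>f x\<bar> = \<bar>\<Sum>y\<in>A - {x}. f y\<bar>" using eq'[OF x] by (simp add: abs_mult)
    also have "\<dots> \<le> (\<Sum>y\<in>A - {x}. \<bar>f y\<bar>)" by (rule sum_abs)
    also have "\<dots> = S - \<bar>f x\<bar>" unfolding S_def using x assms(1) by (simp add: sum_diff1)
    finally show ?thesis .
  qed
  have "\<bar>l\<bar> * S = (\<Sum>x\<in>A. \<bar>l\<bar> * \<bar>f x\<bar>)" unfolding S_def by (simp add: sum_distrib_left)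
  also have "\<dots> \<le> (\<Sum>x\<in>A. S - \<bar>f x\<bar>)" by (rule sum_mono) (rule pt)
  also have "\<dots> = (real (card A) - 1) * S" unfolding S_def by (simp add: sum_subtractf algebra_simps)
  finally show ?thesis using S0 by simp
qed

lemma dd_diam: assumes "x \<in> A" "y \<in> A" "x \<noteq> y" shows "mm_diam A dd = 1"
proof -
  have "{dd x x' | x x'. x \<in> A \<and> x' \<in> A} = {0, 1}"
    using assms by (auto simp: dd_def)
  then show ?thesis unfolding mm_diam_def by (auto intro!: cSup_eq_maximum)
qed

theorem lemma2p7:
  shows "(\<forall>(M :: 'a set) d \<mu> l.
            compact_mm_space M d \<mu> \<and> dist_kernel_eigenvalue \<mu> d l \<longrightarrow>
            \<bar>l\<bar> \<le> mm_diam M d * mm_vol \<mu>)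
       \<and> (\<exists>(Ms :: nat \<Rightarrow> real set) ds \<mu>s ls.
            (\<forall>n. compact_mm_space (Ms n) (ds n) (\<mu>s n) \<and>
                 dist_kernel_eigenvalue (\<mu>s n) (ds n) (ls n) \<and>
                 (\<forall>l. dist_kernel_eigenvalue (\<mu>s n) (ds n) l \<longrightarrow> \<bar>l\<bar> \<le> \<bar>ls n\<bar>)) \<and>
            (\<lambda>n. \<bar>ls n\<bar> / (mm_diam (Ms n) (ds n) * mm_vol (\<mu>s n))) \<longlonglongrightarrow> 1)"
proof (intro conjI allI impI)
  fix M :: "'a set" and d \<mu> l
  assume "compact_mm_space M d \<mu> \<and> dist_kernel_eigenvalue \<mu> d l"
  then show "\<bar>l\<bar> \<le> mm_diam M d * mm_vol \<mu>" using part1 by blast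
next
  define Ms where "Ms = (\<lambda>n::nat. (real ` {0..Suc n}))"
  have fin: "finite (Ms n)" for n unfolding Ms_def by simp
  have card: "card (Ms n) = n + 2" for n
    unfolding Ms_def by (subst card_image) (auto simp: inj_on_def)
  have ne: "Ms n \<noteq> {}" for n unfolding Ms_def by auto
  have diam: "mm_diam (Ms n) dd = 1" for n
    by (rule dd_diam[of 0 _ 1]) (auto simp: Ms_def image_iff intro: bexI[of _ 0] bexI[of _ 1])
  have vol: "mm_vol (count_space (Ms n)) = real n + 2" for n
    unfolding mm_vol_def using fin[of n] card[of n] by (simp add: measure_count_space)
  show "\<exists>(Ms :: nat \<Rightarrow> real set) ds \<mu>s ls.
            (\<forall>n. compact_mm_space (Ms n) (ds n) (\<mu>s n) \<and>
                 dist_kernel_eigenvalue (\<mu>s n) (ds n) (ls n) \<and>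
                 (\<forall>l. dist_kernel_eigenvalue (\<mu>s n) (ds n) l \<longrightarrow> \<bar>l\<bar> \<le> \<bar>ls n\<bar>)) \<and>
            (\<lambda>n. \<bar>ls n\<bar> / (mm_diam (Ms n) (ds n) * mm_vol (\<mu>s n))) \<longlonglongrightarrow> 1"
  proof (intro exI[of _ Ms] exI[of _ "\<lambda>_. dd"] exI[of _ "\<lambda>n. count_space (Ms n)"]
      exI[of _ "\<lambda>n. real (card (Ms n)) - 1"] conjI allI impI)
    fix n
    show "compact_mm_space (Ms n) dd (count_space (Ms n))" by (rule dd_cm[OF fin])
    show "dist_kernel_eigenvalue (count_space (Ms n)) dd (real (card (Ms n)) - 1)"
      by (rule dd_ev[OF fin ne])
    fix l assume "dist_kernel_eigenvalue (count_space (Ms n)) dd l"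
    from dd_bound[OF fin this] show "\<bar>l\<bar> \<le> \<bar>real (card (Ms n)) - 1\<bar>" by simp
  next
    have "(\<lambda>n::nat. (1 + real n) / (real n + 2)) \<longlonglongrightarrow> 1" by real_asymp
    then show "(\<lambda>n. \<bar>real (card (Ms n)) - 1\<bar> / (mm_diam (Ms n) dd * mm_vol (count_space (Ms n)))) \<longlonglongrightarrow> 1"
      by (simp add: card diam vol)
  qed
qed

end
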